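(* Consider the problem $\min_{x\in\mathbb{R}^n} F(x) := f(x)+\psi(x)+\phi(x)$ under the assumptions A.1–A.4 and with the algorithm CPGD described in the context. Then the iterates of CPGD satisfy, for every $k\ge 0$, $$F(x_{k+1}) \le F(x_k) - \frac{\eta_{\min}}{2}\,\|x_{k+1}-x_k\|^2 .$$
   Context: Block structure: $U\in\mathbb{R}^{n\times n}$ is a column permutation of the identity, $U=[U_1,\dots,U_N]$ with $U_i\in\mathbb{R}^{n\times n_i}$, $\sum_i n_i=n$; every $x\in\mathbb{R}^n$ is written uniquely as $x=\sum_i U_i x^{(i)}$ with $x^{(i)}=U_i^T x\in\mathbb{R}^{n_i}$, and $x^{\neq i}$ denotes the collection of blocks $x^{(j)}$, $j\neq i$. Assumptions: (A.1) $f:\mathbb{R}^n\to\mathbb{R}$ is differentiable and for each $i=1,\dots,N$ there is $L_i(x^{\neq i})$ (possibly depending on the other blocks) with $\|U_i^T(\nabla f(x+U_ih)-\nabla f(x))\|\le L_i(x^{\neq i})\|h\|$ for all $x\in\mathbb{R}^n$, $h\in\mathbb{R}^{n_i}$. (A.2) $\psi:\mathbb{R}^n\to\mathbb{R}$ is twice continuously differentiable (possibly nonconvex and nonseparable), and there are an integer $p\ge1$ and constants $H_{\psi_i}>0$ with $\|U_i^T\nabla^2\psi(y)U_i\|\le H_{\psi_i}\|y\|^p$ for all $y\in\mathbb{R}^n$, $i=1,\dots,N$. (A.3) $\phi$ is the indicator function of a nonempty closed convex set $Q=\prod_{i=1}^N Q_i$, $Q_i\subseteq\mathbb{R}^{n_i}$;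 $\phi_i$ denotes the indicator of $Q_i$, so $\phi(x)=\sum_i\phi_i(x^{(i)})$. (A.4) Problem $\min F$ has a solution, so $F^*=\min F>-\infty$. Let $h=f+\psi$. Algorithm CPGD: start from $x_0\in Q$. For $k\ge0$, set $x_{k,0}=x_k$ and for $i_k=1,\dots,N$ let $x_{k,i_k}=(x_{k+1}^{(1)},\dots,x_{k+1}^{(i_k)},x_k^{(i_k+1)},\dots,x_k^{(N)})$ (so $x_{k,N}=x_{k+1}$). At inner step $i_k$, with current point $x_{k,i_k-1}$ and $L_{i_k}:=L_{i_k}(x_{k,i_k-1}^{\neq i_k})$: (1) choose $H_{f,i_k}=\frac{L_{i_k}+\eta_{i_k}}{2}$ with $\eta_{i_k}>0$, and compute the nonnegative root $\alpha_{k,i_k}\ge0$ of $2^{p-1}H_{\psi_{i_k}}\alpha^{p+1}+(2^{p-1}H_{\psi_{i_k}}\|x_{k,i_k-1}\|^p+H_{f,i_k})\alpha=\|U_{i_k}^T\nabla h(x_{k,i_k-1})\|$; (2) set $H_{F,i_k}=2^{p-1}H_{\psi_{i_k}}\|x_{k,i_k-1}\|^p+2^{p-1}H_{\psi_{i_k}}\alpha_{k,i_k}^p+H_{f,i_k}$; (3) compute $d_{k,i_k}=\arg\min_{d\in\mathbb{R}^{n_{i_k}}}\langle U_{i_k}^T\nabla h(x_{k,i_k-1}),d\rangle+\frac{H_{F,i_k}}{2}\|d\|^2+\phi_{i_k}(x_k^{(i_k)}+d)$, i.e. $x_k^{(i_k)}+d_{k,i_k}=\mathrm{proj}_{Q_{i_k}}\big(x_k^{(i_k)}-\frac{1}{H_{F,i_k}}U_{i_k}^T\nabla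 h(x_{k,i_k-1})\big)$; (4) set $x_{k+1}^{(i_k)}=x_k^{(i_k)}+d_{k,i_k}$. Finally $\eta_{\min}:=\min_{k,i_k}\eta_{i_k}$ (the minimum over all outer iterations $k$ and inner steps $i_k$ of the parameters $\eta_{i_k}$). *)

theory Defs
  imports "HOL-Analysis.Analysis"
begin

text \<open>Block structure: the column permutation U = [U_1,...,U_N] of the identity is encoded
by a partition of the coordinate index type 'n into blocks B 1, ..., B N.
U_i U_i^T x is the coordinate projection onto block B i; norms and inner products of
block vectors x^(i) coincide with those of their zero-padded embeddings.\<close>

definition blockproj :: "'n set \<Rightarrow> real^'n \<Rightarrow> real^'n" where
  "blockproj S x = (\<chi> j. if j \<in> S then x $ j else 0)"

definition block_space :: "'n set \<Rightarrow> (real^'n) set" where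
  "block_space S = {v. \<forall>j. j \<notin> S \<longrightarrow> v $ j = 0}"

text \<open>Product set Q = Q_1 x ... x Q_N (each Q i embedded in block space).\<close>
definition prodset :: "nat \<Rightarrow> (nat \<Rightarrow> 'n set) \<Rightarrow> (nat \<Rightarrow> (real^'n) set) \<Rightarrow> (real^'n) set" where
  "prodset N B Q = {x. \<forall>i\<in>{1..N}. blockproj (B i) x \<in> Q i}"

text \<open>F = f + psi + phi with phi the indicator of Q (extended real valued).\<close>
definition Fobj :: "(real^'n \<Rightarrow> real) \<Rightarrow> (real^'n \<Rightarrow> real) \<Rightarrow> (real^'n) set \<Rightarrow> real^'n \<Rightarrow> ereal" where
  "Fobj f \<psi> Q x = ereal (f x + \<psi> x) + (if x \<in> Q then 0 else \<infinity>)"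

end

theory Submission
  imports Defs
begin

lemma pow_le:
  fixes a b :: real assumes "a \<ge> 0" "b \<ge> 0" "p \<ge> 1"
  shows "(a+b)^p \<le> 2^(p-1) * (a^p+b^p)"
  using assms(3)
proof (induction p rule: dec_induct)
  case base then show ?case by simp
next
  case (step q)
  have key: "(a+b)*(a^q+b^q) \<le> 2*(a^Suc q + b^Suc q)"
  proof -
    have "0 \<le> (a^q - b^q)*(a-b)"
    proof (cases "a \<le> b")
      case True then have "a^q \<le> b^q" using assms power_mono by blast
      with True show ?thesis by (simp add: mult_nonpos_nonpos)
    next
      case False then have "b^q \<le> a^q" using assms power_mono by (meson linear)
      with False show ?thesis by simp
    qed
    then show ?thesis by (simp add: algebra_simps)
  qed
  have "(a+b)^Suc q = (a+b)*(a+b)^q" by simp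
  also have "\<dots> \<le> (a+b) * (2^(q-1)*(a^q+b^q))"
    using step.IH assms by (intro mult_left_mono) auto
  also have "\<dots> = 2^(q-1) * ((a+b)*(a^q+b^q))" by simp
  also have "\<dots> \<le> 2^(q-1) * (2*(a^Suc q + b^Suc q))"
    using key by (intro mult_left_mono) auto
  also have "\<dots> = 2^(Suc q - 1) * (a^Suc q + b^Suc q)"
    using step.hyps by (cases q) auto
  finally show ?case .
qed

lemma bp_nth[simp]: "blockproj S x $ j = (if j \<in> S then x $ j else 0)"
  by (simp add: blockproj_def)

lemma bs_iff: "d \<in> block_space S \<longleftrightarrow> (\<forall>j. j \<notin> S \<longrightarrow> d $ j = 0)"
  by (simp add: block_space_def)

lemma bp_inner: "d \<in> block_space S \<Longrightarrow> blockproj S v \<bullet> d = v \<bullet> d"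
  unfolding inner_vec_def bs_iff by (intro sum.cong) auto

lemma bp_self: "d \<in> block_space S \<Longrightarrow> blockproj S d = d"
  unfolding bs_iff by (simp add: vec_eq_iff)

lemma bp_in: "blockproj S v \<in> block_space S"
  unfolding bs_iff by simp

lemma bp_linear: "bounded_linear (blockproj S)"
proof -
  have "linear (blockproj S)" by (rule linearI) (auto simp: vec_eq_iff)
  then show ?thesis by (simp add: linear_conv_bounded_linear)
qed

lemma deriv_line:
  assumes "\<forall>z. (g has_derivative (G z)) (at z)"
  shows "((\<lambda>t::real. g (y + t *\<^sub>R d)) has_derivative (\<lambda>s. G (y + t*\<^sub>R d) (s *\<^sub>R d))) (at t)"
proof -
  have "((\<lambda>t::real. y + t *\<^sub>R d) has_derivative (\<lambda>s. s *\<^sub>R d)) (at t)"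
    by (auto intro!: derivative_eq_intros)
  from has_derivative_compose[OF this assms[rule_format]] show ?thesis by (simp add: o_def)
qed

lemma desc_f:
  fixes f :: "real^'n \<Rightarrow> real" and gf :: "real^'n \<Rightarrow> real^'n"
  assumes f_grad: "\<forall>y. (f has_derivative (\<lambda>h. gf y \<bullet> h)) (at y)"
    and d: "d \<in> block_space S"
    and lip: "\<forall>hh\<in>block_space S. norm (blockproj S (gf (y+hh) - gf y)) \<le> L0 * norm hh"
  shows "f (y+d) \<le> f y + gf y \<bullet> d + L0/2 * norm d ^ 2"
proof -
  define \<phi> where "\<phi> t = f (y + t *\<^sub>R d) - t * (gf y \<bullet> d) - L0/2 * t^2 * norm d ^ 2" for t
  have "\<phi> 1 \<le> \<phi> 0"
  proof (rule DERIV_nonpos_imp_nonincreasing[of 0 1 \<phi>])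
    fix t :: real assume t: "0 \<le> t" "t \<le> 1"
    have D1: "((\<lambda>t::real. f (y + t *\<^sub>R d)) has_derivative (\<lambda>s. gf (y + t*\<^sub>R d) \<bullet> (s *\<^sub>R d))) (at t)"
      using deriv_line[of f "\<lambda>z h. gf z \<bullet> h"] f_grad by blast
    have D1': "((\<lambda>t::real. f (y + t *\<^sub>R d)) has_field_derivative (gf (y + t*\<^sub>R d) \<bullet> d)) (at t)"
    proof -
      have eq: "(\<lambda>s. gf (y + t*\<^sub>R d) \<bullet> (s *\<^sub>R d)) = (*) (gf (y + t*\<^sub>R d) \<bullet> d)"
        by (auto simp: fun_eq_iff)
      show ?thesis unfolding has_field_derivative_def using D1 eq by simp
    qed
    have D: "(\<phi> has_field_derivative (gf (y + t*\<^sub>R d) \<bullet> d - gf y \<bullet> d - L0 * t * norm d ^ 2)) (at t)"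
      unfolding \<phi>_def by (rule derivative_eq_intros D1' refl | simp)+
    have td: "t *\<^sub>R d \<in> block_space S" using d by (simp add: bs_iff)
    have "gf (y + t*\<^sub>R d) \<bullet> d - gf y \<bullet> d = blockproj S (gf (y + t*\<^sub>R d) - gf y) \<bullet> d"
      using bp_inner[OF d] by (simp add: inner_diff_left)
    also have "\<dots> \<le> norm (blockproj S (gf (y + t*\<^sub>R d) - gf y)) * norm d"
      by (rule norm_cauchy_schwarz)
    also have "\<dots> \<le> L0 * norm (t *\<^sub>R d) * norm d"
      using lip td by (intro mult_right_mono) auto
    also have "\<dots> = L0 * t * norm d ^ 2" using t by (simp add: power2_eq_square)
    finally show "\<exists>y. (\<phi> has_real_derivative y) (at t) \<and> y \<le> 0" using D by auto
  qed simp
  then show ?thesis by (simp add: \<phi>_def)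
qed

lemma hess_bound:
  fixes H :: "real^'n^'n"
  assumes d: "d \<in> block_space S"
  shows "(H *v d) \<bullet> d \<le> onorm (\<lambda>h. blockproj S (H *v blockproj S h)) * norm d ^ 2"
proof -
  have bl: "bounded_linear (\<lambda>h. blockproj S (H *v blockproj S h))"
    using bp_linear[of S] bounded_linear_compose[OF bp_linear[of S]]
      bounded_linear_compose[OF matrix_vector_mul_bounded_linear[of H]] by blast
  have "(H *v d) \<bullet> d = blockproj S (H *v blockproj S d) \<bullet> d"
    using bp_inner[OF d] bp_self[OF d] by simp
  also have "\<dots> \<le> norm (blockproj S (H *v blockproj S d)) * norm d" by (rule norm_cauchy_schwarz)
  also have "\<dots> \<le> onorm (\<lambda>h. blockproj S (H *v blockproj S h)) * norm d * norm d"
    using onorm[OF bl, of d] by (intro mult_right_mono) auto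
  finally show ?thesis by (simp add: power2_eq_square mult.assoc)
qed

lemma desc_psi:
  fixes \<psi> :: "real^'n \<Rightarrow> real" and g\<psi> :: "real^'n \<Rightarrow> real^'n" and H\<psi> :: "real^'n \<Rightarrow> real^'n^'n"
  assumes psi_grad: "\<forall>y. (\<psi> has_derivative (\<lambda>h. g\<psi> y \<bullet> h)) (at y)"
    and psi_hess: "\<forall>y. (g\<psi> has_derivative (\<lambda>h. H\<psi> y *v h)) (at y)"
    and d: "d \<in> block_space S"
    and bnd: "\<forall>t\<in>{0..1}. onorm (\<lambda>h. blockproj S (H\<psi> (y + t *\<^sub>R d) *v blockproj S h)) \<le> C"
  shows "\<psi> (y+d) \<le> \<psi> y + g\<psi> y \<bullet> d + C/2 * norm d ^ 2"
proof -
  define chi where "chi t = g\<psi> (y + t *\<^sub>R d) \<bullet> d - g\<psi> y \<bullet> d - C * t * norm d ^ 2" for t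
  have chi_le: "chi t \<le> 0" if t: "0 \<le> t" "t \<le> 1" for t
  proof -
    have "chi t \<le> chi 0"
    proof (rule DERIV_nonpos_imp_nonincreasing[of 0 t chi])
      fix s :: real assume s: "0 \<le> s" "s \<le> t"
      have D1: "((\<lambda>t::real. g\<psi> (y + t *\<^sub>R d)) has_derivative (\<lambda>r. H\<psi> (y + s*\<^sub>R d) *v (r *\<^sub>R d))) (at s)"
        using deriv_line[of g\<psi> "\<lambda>z h. H\<psi> z *v h"] psi_hess by blast
      have D2: "((\<lambda>t::real. g\<psi> (y + t *\<^sub>R d) \<bullet> d) has_derivative (\<lambda>r. (H\<psi> (y + s*\<^sub>R d) *v (r *\<^sub>R d)) \<bullet> d)) (at s)"
        using has_derivative_inner_left[OF D1] by simp
      have D1': "((\<lambda>t::real. g\<psi> (y + t *\<^sub>R d) \<bullet> d) has_field_derivative ((H\<psi> (y + s*\<^sub>R d) *v d) \<bullet> d)) (at s)"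
      proof -
        have eq: "(\<lambda>r. (H\<psi> (y + s*\<^sub>R d) *v (r *\<^sub>R d)) \<bullet> d) = (*) ((H\<psi> (y + s*\<^sub>R d) *v d) \<bullet> d)"
          by (auto simp: fun_eq_iff matrix_vector_mult_scaleR)
        show ?thesis unfolding has_field_derivative_def using D2 eq by simp
      qed
      have D: "(chi has_field_derivative ((H\<psi> (y + s*\<^sub>R d) *v d) \<bullet> d - C * norm d ^ 2)) (at s)"
        unfolding chi_def by (rule derivative_eq_intros D1' refl | simp)+
      have "(H\<psi> (y + s*\<^sub>R d) *v d) \<bullet> d \<le> onorm (\<lambda>h. blockproj S (H\<psi> (y + s *\<^sub>R d) *v blockproj S h)) * norm d ^ 2"
        by (rule hess_bound[OF d])
      also have "\<dots> \<le> C * norm d ^ 2" using bnd s t by (intro mult_right_mono) auto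
      finally show "\<exists>y. (chi has_real_derivative y) (at s) \<and> y \<le> 0" using D by auto
    qed (use t in simp)
    then show ?thesis by (simp add: chi_def)
  qed
  define \<phi> where "\<phi> t = \<psi> (y + t *\<^sub>R d) - t * (g\<psi> y \<bullet> d) - C/2 * t^2 * norm d ^ 2" for t
  have "\<phi> 1 \<le> \<phi> 0"
  proof (rule DERIV_nonpos_imp_nonincreasing[of 0 1 \<phi>])
    fix t :: real assume t: "0 \<le> t" "t \<le> 1"
    have D1: "((\<lambda>t::real. \<psi> (y + t *\<^sub>R d)) has_derivative (\<lambda>s. g\<psi> (y + t*\<^sub>R d) \<bullet> (s *\<^sub>R d))) (at t)"
      using deriv_line[of \<psi> "\<lambda>z h. g\<psi> z \<bullet> h"] psi_grad by blast
    have D1': "((\<lambda>t::real. \<psi> (y + t *\<^sub>R d)) has_field_derivative (g\<psi> (y + t*\<^sub>R d) \<bullet> d)) (at t)"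
    proof -
      have eq: "(\<lambda>s. g\<psi> (y + t*\<^sub>R d) \<bullet> (s *\<^sub>R d)) = (*) (g\<psi> (y + t*\<^sub>R d) \<bullet> d)"
        by (auto simp: fun_eq_iff)
      show ?thesis unfolding has_field_derivative_def using D1 eq by simp
    qed
    have D: "(\<phi> has_field_derivative (g\<psi> (y + t*\<^sub>R d) \<bullet> d - g\<psi> y \<bullet> d - C * t * norm d ^ 2)) (at t)"
      unfolding \<phi>_def by (rule derivative_eq_intros D1' refl | simp)+
    show "\<exists>y. (\<phi> has_real_derivative y) (at t) \<and> y \<le> 0" using D chi_le[OF t] unfolding chi_def by auto
  qed simp
  then show ?thesis by (simp add: \<phi>_def)
qed

lemma block_step:
  fixes f \<psi> :: "real^'n \<Rightarrow> real" and gf g\<psi> :: "real^'n \<Rightarrow> real^'n" and H\<psi> :: "real^'n \<Rightarrow> real^'n^'n"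
    and p :: nat and L0 Hp \<eta> \<alpha> HF :: real
  assumes f_grad: "\<forall>y. (f has_derivative (\<lambda>h. gf y \<bullet> h)) (at y)"
    and psi_grad: "\<forall>y. (\<psi> has_derivative (\<lambda>h. g\<psi> y \<bullet> h)) (at y)"
    and psi_hess: "\<forall>y. (g\<psi> has_derivative (\<lambda>h. H\<psi> y *v h)) (at y)"
    and Qs: "Qi \<subseteq> block_space S" and Qc: "closed Qi" and Qv: "convex Qi"
    and u: "u \<in> Qi" and yu: "blockproj S y = u"
    and lip: "\<forall>hh\<in>block_space S. norm (blockproj S (gf (y+hh) - gf y)) \<le> L0 * norm hh"
    and Hb: "\<forall>z. onorm (\<lambda>h. blockproj S (H\<psi> z *v blockproj S h)) \<le> Hp * norm z ^ p"
    and Hp: "Hp > 0" and eta: "\<eta> > 0" and al: "\<alpha> \<ge> 0" and p: "p \<ge> 1" and L0: "L0 \<ge> 0"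
    and root: "2^(p-1) * Hp * \<alpha> ^ (p+1) + (2^(p-1) * Hp * norm y ^ p + (L0 + \<eta>) / 2) * \<alpha>
           = norm (blockproj S (gf y + g\<psi> y))"
    and HF: "HF = 2^(p-1) * Hp * norm y ^ p + 2^(p-1) * Hp * \<alpha> ^ p + (L0 + \<eta>) / 2"
    and y': "y' = y - blockproj S y + closest_point Qi (u - (1 / HF) *\<^sub>R blockproj S (gf y + g\<psi> y))"
  shows "f y' + \<psi> y' \<le> f y + \<psi> y - \<eta>/2 * norm (y' - y)^2" and "y' - y \<in> block_space S"
proof -
  define G where "G = blockproj S (gf y + g\<psi> y)"
  define v where "v = u - (1 / HF) *\<^sub>R G"
  define d where "d = closest_point Qi v - u"
  have Qne: "Qi \<noteq> {}" using u by auto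
  have Pin: "closest_point Qi v \<in> Qi" using closest_point_in_set[OF Qc Qne] .
  have "closest_point Qi v \<in> block_space S" "u \<in> block_space S" using Pin u Qs by auto
  then have dbs: "d \<in> block_space S" unfolding d_def bs_iff by auto
  have yd: "y' = y + d" using y' yu unfolding d_def v_def G_def by simp
  then show "y' - y \<in> block_space S" using dbs by simp
  define CC where "CC = 2^(p-1) * Hp * (norm y ^ p + \<alpha> ^ p)"
  have C0: "CC \<ge> 0" unfolding CC_def using Hp al by auto
  have HFC: "HF = CC + (L0 + \<eta>) / 2" unfolding HF CC_def by (simp add: algebra_simps)
  have "(L0 + \<eta>)/2 > 0" using L0 eta by simp
  then have HFpos: "HF > 0" using HFC C0 by (simp add: add_divide_distrib)
  have HFa: "HF * \<alpha> = norm G" unfolding G_def root[symmetric] HF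
    by (simp add: algebra_simps power_Suc2)
  have nd: "norm d \<le> \<alpha>"
  proof -
    have "norm d = dist (closest_point Qi v) (closest_point Qi u)"
      unfolding d_def closest_point_self[OF u] by (simp add: dist_norm)
    also have "\<dots> \<le> dist v u" by (rule closest_point_lipschitz[OF Qv Qc Qne])
    also have "\<dots> = norm G / HF" unfolding v_def dist_norm using HFpos by simp
    also have "\<dots> = \<alpha>" using HFa HFpos by (simp add: field_simps)
    finally show ?thesis .
  qed
  have proj: "G \<bullet> d \<le> - HF * norm d ^ 2"
  proof -
    have "inner (v - closest_point Qi v) (u - closest_point Qi v) \<le> 0"
      by (rule closest_point_dot[OF Qv Qc u])
    moreover have "v - closest_point Qi v = - ((1/HF) *\<^sub>R G + d)" unfolding v_def d_def by simp
    moreover have "u - closest_point Qi v = - d" unfolding d_def by simp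
    ultimately have "((1/HF) *\<^sub>R G + d) \<bullet> d \<le> 0" by (simp add: inner_add_left inner_diff_left)
    then have "(1/HF) * (G \<bullet> d) + norm d ^ 2 \<le> 0"
      by (simp add: inner_add_left power2_norm_eq_inner)
    then have "HF * ((1/HF) * (G \<bullet> d) + norm d ^ 2) \<le> 0"
      using HFpos by (simp add: mult_nonneg_nonpos)
    then show ?thesis using HFpos by (simp add: algebra_simps)
  qed
  have bnd: "\<forall>t\<in>{0..1}. onorm (\<lambda>h. blockproj S (H\<psi> (y + t *\<^sub>R d) *v blockproj S h)) \<le> CC"
  proof
    fix t :: real assume t: "t \<in> {0..1}"
    have "norm (y + t *\<^sub>R d) \<le> norm y + \<alpha>"
    proof -
      have "norm (y + t *\<^sub>R d) \<le> norm y + \<bar>t\<bar> * norm d" using norm_triangle_ineq[of y "t *\<^sub>R d"] by simp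
      also have "\<bar>t\<bar> * norm d \<le> 1 * \<alpha>" using t nd by (intro mult_mono) auto
      finally show ?thesis by simp
    qed
    then have "norm (y + t *\<^sub>R d) ^ p \<le> (norm y + \<alpha>) ^ p" by (intro power_mono) auto
    also have "\<dots> \<le> 2^(p-1) * (norm y ^ p + \<alpha> ^ p)" by (rule pow_le) (use al p in auto)
    finally have "Hp * norm (y + t *\<^sub>R d) ^ p \<le> CC" unfolding CC_def using Hp
      by (simp add: mult.assoc mult.left_commute)
    then show "onorm (\<lambda>h. blockproj S (H\<psi> (y + t *\<^sub>R d) *v blockproj S h)) \<le> CC"
      using Hb order_trans by blast
  qed
  have F1: "f (y+d) \<le> f y + gf y \<bullet> d + L0/2 * norm d ^ 2" by (rule desc_f[OF f_grad dbs lip])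
  have F2: "\<psi> (y+d) \<le> \<psi> y + g\<psi> y \<bullet> d + CC/2 * norm d ^ 2" by (rule desc_psi[OF psi_grad psi_hess dbs bnd])
  have Gd: "G \<bullet> d = gf y \<bullet> d + g\<psi> y \<bullet> d" unfolding G_def bp_inner[OF dbs] by (simp add: inner_add_left)
  have "f y' + \<psi> y' \<le> f y + \<psi> y + G \<bullet> d + (L0/2 * norm d ^ 2 + CC/2 * norm d ^ 2)"
    unfolding yd using F1 F2 Gd by linarith
  also have "\<dots> \<le> f y + \<psi> y - HF * norm d ^ 2 + (L0/2 * norm d ^ 2 + CC/2 * norm d ^ 2)" using proj by simp
  also have "\<dots> = f y + \<psi> y - (CC + \<eta>)/2 * norm d ^ 2" unfolding HFC by (simp add: field_simps)
  also have "\<dots> \<le> f y + \<psi> y - \<eta>/2 * norm d ^ 2" using C0 by (simp add: mult_right_mono divide_right_mono)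
  finally show "f y' + \<psi> y' \<le> f y + \<psi> y - \<eta>/2 * norm (y' - y)^2" using yd by simp
qed

theorem lemma1:
  fixes f \<psi> :: "real^'n \<Rightarrow> real"
    and gf g\<psi> :: "real^'n \<Rightarrow> real^'n"
    and H\<psi> :: "real^'n \<Rightarrow> real^'n^'n"
    and N p :: nat
    and B :: "nat \<Rightarrow> 'n set"
    and Q :: "nat \<Rightarrow> (real^'n) set"
    and L :: "nat \<Rightarrow> real^'n \<Rightarrow> real"
    and Hpsi :: "nat \<Rightarrow> real"
    and x :: "nat \<Rightarrow> real^'n"
    and xin :: "nat \<Rightarrow> nat \<Rightarrow> real^'n"
    and \<eta> \<alpha> HF :: "nat \<Rightarrow> nat \<Rightarrow> real"
    and k :: nat
  assumes blocks_nonempty: "\<forall>i\<in>{1..N}. B i \<noteq> {}"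
    and blocks_disjoint: "\<forall>i\<in>{1..N}. \<forall>j\<in>{1..N}. i \<noteq> j \<longrightarrow> B i \<inter> B j = {}"
    and blocks_cover: "(\<Union>i\<in>{1..N}. B i) = UNIV"
    \<comment> \<open>(A.1)\<close>
    and f_grad: "\<forall>y. (f has_derivative (\<lambda>h. gf y \<bullet> h)) (at y)"
    and L_indep: "\<forall>i\<in>{1..N}. \<forall>y z. (\<forall>j. j \<notin> B i \<longrightarrow> y $ j = z $ j) \<longrightarrow> L i y = L i z"
    and L_lip: "\<forall>i\<in>{1..N}. \<forall>y. \<forall>h\<in>block_space (B i).
                 norm (blockproj (B i) (gf (y + h) - gf y)) \<le> L i y * norm h"
    \<comment> \<open>(A.2)\<close>
    and psi_grad: "\<forall>y. (\<psi> has_derivative (\<lambda>h. g\<psi> y \<bullet> h)) (at y)"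
    and psi_hess: "\<forall>y. (g\<psi> has_derivative (\<lambda>h. H\<psi> y *v h)) (at y)"
    and psi_hess_cont: "continuous_on UNIV H\<psi>"
    and p_ge: "p \<ge> 1"
    and Hpsi_pos: "\<forall>i\<in>{1..N}. Hpsi i > 0"
    and Hpsi_bound: "\<forall>i\<in>{1..N}. \<forall>y.
                 onorm (\<lambda>h. blockproj (B i) (H\<psi> y *v blockproj (B i) h)) \<le> Hpsi i * norm y ^ p"
    \<comment> \<open>(A.3)\<close>
    and Q_sub: "\<forall>i\<in>{1..N}. Q i \<subseteq> block_space (B i)"
    and Q_closed: "\<forall>i\<in>{1..N}. closed (Q i)"
    and Q_convex: "\<forall>i\<in>{1..N}. convex (Q i)"
    and Q_nonempty: "\<forall>i\<in>{1..N}. Q i \<noteq> {}"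
    \<comment> \<open>(A.4)\<close>
    and has_min: "\<exists>xs. \<forall>y. Fobj f \<psi> (prodset N B Q) xs \<le> Fobj f \<psi> (prodset N B Q) y"
    \<comment> \<open>algorithm CPGD\<close>
    and x0: "x 0 \<in> prodset N B Q"
    and xin_start: "\<forall>m. xin m 0 = x m"
    and xin_end: "\<forall>m. xin m N = x (Suc m)"
    and eta_pos: "\<forall>m. \<forall>i\<in>{1..N}. \<eta> m i > 0"
    and alpha_nonneg: "\<forall>m. \<forall>i\<in>{1..N}. \<alpha> m i \<ge> 0"
    and alpha_root: "\<forall>m. \<forall>i\<in>{1..N}.
           2^(p-1) * Hpsi i * \<alpha> m i ^ (p+1)
           + (2^(p-1) * Hpsi i * norm (xin m (i-1)) ^ p + (L i (xin m (i-1)) + \<eta> m i) / 2) * \<alpha> m i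
           = norm (blockproj (B i) (gf (xin m (i-1)) + g\<psi> (xin m (i-1))))"
    and HF_def: "\<forall>m. \<forall>i\<in>{1..N}.
           HF m i = 2^(p-1) * Hpsi i * norm (xin m (i-1)) ^ p + 2^(p-1) * Hpsi i * \<alpha> m i ^ p
                    + (L i (xin m (i-1)) + \<eta> m i) / 2"
    and step: "\<forall>m. \<forall>i\<in>{1..N}.
           xin m i = xin m (i-1) - blockproj (B i) (xin m (i-1))
             + closest_point (Q i) (blockproj (B i) (x m)
                 - (1 / HF m i) *\<^sub>R blockproj (B i) (gf (xin m (i-1)) + g\<psi> (xin m (i-1))))"
  shows "Fobj f \<psi> (prodset N B Q) (x (Suc k))
           \<le> Fobj f \<psi> (prodset N B Q) (x k)
              - ereal ((INF m. INF i\<in>{1..N}. \<eta> m i) / 2 * norm (x (Suc k) - x k)^2)"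
proof -
  let ?P = "prodset N B Q"
  have N1: "N \<ge> 1"
  proof (rule ccontr)
    assume "\<not> N \<ge> 1" then have "N = 0" by simp
    then show False using blocks_cover by simp
  qed
  define emin where "emin = (INF m. INF i\<in>{1..N}. \<eta> m i)"
  have inner_ge: "(INF i\<in>{1..N}. \<eta> m i) \<ge> 0" for m
    using N1 eta_pos by (intro cINF_greatest) (auto intro: less_imp_le)
  have inner_le: "(INF i\<in>{1..N}. \<eta> m i) \<le> \<eta> m i" if "i \<in> {1..N}" for m i
    using that by (intro cINF_lower) (auto intro: bdd_below_finite)
  have emin_le: "emin \<le> \<eta> m i" if "i \<in> {1..N}" for m i
  proof -
    have bb: "bdd_below (range (\<lambda>m. INF i\<in>{1..N}. \<eta> m i))"
    proof (rule bdd_belowI[where m=0])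
      fix z assume "z \<in> range (\<lambda>m. INF i\<in>{1..N}. \<eta> m i)"
      then obtain m' where "z = (INF i\<in>{1..N}. \<eta> m' i)" by auto
      then show "0 \<le> z" using inner_ge[of m'] by simp
    qed
    have "emin \<le> (INF i\<in>{1..N}. \<eta> m i)" unfolding emin_def
      by (rule cINF_lower[OF bb]) simp
    then show ?thesis using inner_le[OF that, of m] by linarith
  qed
  have emin_ge: "emin \<ge> 0" unfolding emin_def by (rule cINF_greatest) (use inner_ge in auto)
  show ?thesis
  proof (cases "x k \<in> ?P")
    case False
    then show ?thesis by (simp add: Fobj_def)
  next
    case True
    have xkQ: "blockproj (B i) (x k) \<in> Q i" if "i \<in> {1..N}" for i
      using True that unfolding prodset_def by auto
    have inv: "f (xin k j) + \<psi> (xin k j) \<le> f (x k) + \<psi> (x k) - emin/2 * norm (xin k j - x k)^2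
       \<and> (\<forall>c. (\<forall>l\<in>{1..j}. c \<notin> B l) \<longrightarrow> xin k j $ c = x k $ c)
       \<and> (\<forall>l\<in>{1..j}. blockproj (B l) (xin k j) \<in> Q l)" if "j \<le> N" for j
      using that
    proof (induction j)
      case 0
      then show ?case using xin_start by simp
    next
      case (Suc j)
      define i where "i = Suc j"
      have i: "i \<in> {1..N}" using Suc.prems i_def by simp
      have ij: "i - 1 = j" using i_def by simp
      define y where "y = xin k j"
      have IH: "f y + \<psi> y \<le> f (x k) + \<psi> (x k) - emin/2 * norm (y - x k)^2"
        "\<forall>c. (\<forall>l\<in>{1..j}. c \<notin> B l) \<longrightarrow> y $ c = x k $ c"
        "\<forall>l\<in>{1..j}. blockproj (B l) y \<in> Q l"
        using Suc y_def by auto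
      have notin: "c \<notin> B l" if "c \<in> B i" "l \<in> {1..j}" for c l
      proof -
        have "l \<in> {1..N}" "l \<noteq> i" using that i i_def by auto
        then have "B i \<inter> B l = {}" using blocks_disjoint i by blast
        then show ?thesis using that by blast
      qed
      have yu: "blockproj (B i) y = blockproj (B i) (x k)"
        using IH(2) notin by (simp add: vec_eq_iff)
      have L0: "L i y \<ge> 0"
      proof -
        have "B i \<noteq> {}" using blocks_nonempty i by blast
        then obtain c where c: "c \<in> B i" by blast
        have "axis c (1::real) \<in> block_space (B i)" using c by (auto simp: bs_iff axis_def)
        then have "norm (blockproj (B i) (gf (y + axis c 1) - gf y)) \<le> L i y * norm (axis c (1::real))"
          using L_lip i by blast
        then show ?thesis using norm_ge_zero order_trans by (metis mult.right_neutral norm_axis_1)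
      qed
      have step_i: "xin k i = y - blockproj (B i) y + closest_point (Q i) (blockproj (B i) (x k)
                 - (1 / HF k i) *\<^sub>R blockproj (B i) (gf y + g\<psi> y))"
        using step i ij y_def by auto
      have lipi: "\<forall>hh\<in>block_space (B i). norm (blockproj (B i) (gf (y+hh) - gf y)) \<le> L i y * norm hh"
        using L_lip i by blast
      have Hbi: "\<forall>z. onorm (\<lambda>h. blockproj (B i) (H\<psi> z *v blockproj (B i) h)) \<le> Hpsi i * norm z ^ p"
        using Hpsi_bound i by blast
      have rooti: "2^(p-1) * Hpsi i * \<alpha> k i ^ (p+1) + (2^(p-1) * Hpsi i * norm y ^ p + (L i y + \<eta> k i) / 2) * \<alpha> k i
           = norm (blockproj (B i) (gf y + g\<psi> y))"
        using bspec[OF spec[OF alpha_root, of k] i] by (simp only: ij y_def)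
      have HFi: "HF k i = 2^(p-1) * Hpsi i * norm y ^ p + 2^(p-1) * Hpsi i * \<alpha> k i ^ p + (L i y + \<eta> k i) / 2"
        using bspec[OF spec[OF HF_def, of k] i] by (simp only: ij y_def)
      have BS: "f (xin k i) + \<psi> (xin k i) \<le> f y + \<psi> y - \<eta> k i/2 * norm (xin k i - y)^2"
           "xin k i - y \<in> block_space (B i)"
        using block_step[OF f_grad psi_grad psi_hess Q_sub[rule_format, OF i] Q_closed[rule_format, OF i]
            Q_convex[rule_format, OF i] xkQ[OF i] yu lipi Hbi Hpsi_pos[rule_format, OF i]
            bspec[OF spec[OF eta_pos, of k] i] bspec[OF spec[OF alpha_nonneg, of k] i] p_ge L0 rooti HFi step_i]
        by auto
      have orth: "(y - x k) \<bullet> (xin k i - y) = 0"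
      proof -
        have "\<forall>c. (y - x k) $ c * (xin k i - y) $ c = 0"
        proof
          fix c show "(y - x k) $ c * (xin k i - y) $ c = 0"
          proof (cases "c \<in> B i")
            case True then show ?thesis using IH(2) notin by auto
          next
            case False then show ?thesis using BS(2) by (simp add: bs_iff)
          qed
        qed
        then show ?thesis unfolding inner_vec_def inner_real_def
          by (intro sum.neutral) (simp only: ball_UNIV, simp)
      qed
      have pyth: "norm (xin k i - x k)^2 = norm (y - x k)^2 + norm (xin k i - y)^2"
      proof -
        have "xin k i - x k = (y - x k) + (xin k i - y)" by simp
        then show ?thesis using norm_add_Pythagorean[of "y - x k" "xin k i - y"] orth
          by (simp add: orthogonal_def)
      qed
      have "emin/2 * norm (xin k i - y)^2 \<le> \<eta> k i/2 * norm (xin k i - y)^2"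
        using emin_le[OF i] by (intro mult_right_mono) auto
      then have c1: "f (xin k i) + \<psi> (xin k i) \<le> f (x k) + \<psi> (x k) - emin/2 * norm (xin k i - x k)^2"
        using BS(1) IH(1) pyth by (simp add: algebra_simps)
      have c2: "\<forall>c. (\<forall>l\<in>{1..i}. c \<notin> B l) \<longrightarrow> xin k i $ c = x k $ c"
      proof (intro allI impI)
        fix c assume c: "\<forall>l\<in>{1..i}. c \<notin> B l"
        then have "c \<notin> B i" using i by auto
        then have "xin k i $ c = y $ c" using BS(2) by (simp add: bs_iff)
        then show "xin k i $ c = x k $ c" using IH(2) c i_def by auto
      qed
      have c3: "\<forall>l\<in>{1..i}. blockproj (B l) (xin k i) \<in> Q l"
      proof
        fix l assume l: "l \<in> {1..i}"
        show "blockproj (B l) (xin k i) \<in> Q l"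
        proof (cases "l = i")
          case True
          let ?Pv = "closest_point (Q i) (blockproj (B i) (x k)
                 - (1 / HF k i) *\<^sub>R blockproj (B i) (gf y + g\<psi> y))"
          have Pin: "?Pv \<in> Q i" by (rule closest_point_in_set[OF Q_closed[rule_format, OF i] Q_nonempty[rule_format, OF i]])
          then have "?Pv \<in> block_space (B i)" using Q_sub[rule_format, OF i] by blast
          then have "blockproj (B i) (xin k i) = ?Pv" unfolding step_i by (simp add: vec_eq_iff bs_iff)
          then show ?thesis using Pin True by simp
        next
          case False
          then have l': "l \<in> {1..j}" using l i_def by auto
          have "blockproj (B l) (xin k i) = blockproj (B l) y"
          proof -
            have "blockproj (B l) (xin k i) $ c = blockproj (B l) y $ c" for c
            proof (cases "c \<in> B l")
              case True
              then have "c \<notin> B i" using notin l' by blast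
              then have "(xin k i - y) $ c = 0" using BS(2) unfolding bs_iff by blast
              then show ?thesis by simp
            qed simp
            then show ?thesis by (simp add: vec_eq_iff)
          qed
          then show ?thesis using IH(3) l' by simp
        qed
      qed
      show ?case using c1 c2 c3 i_def by simp
    qed
    have fin: "f (xin k N) + \<psi> (xin k N) \<le> f (x k) + \<psi> (x k) - emin/2 * norm (xin k N - x k)^2"
         "\<forall>l\<in>{1..N}. blockproj (B l) (xin k N) \<in> Q l"
      using inv[of N] by auto
    have xS: "x (Suc k) \<in> ?P" using fin(2) xin_end unfolding prodset_def by simp
    show ?thesis using fin(1) xS True xin_end unfolding Fobj_def emin_def[symmetric] by simp
  qed
qed

end
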